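(* Let $G$ be a graph containing a cycle, and let $k\ge 0$ and $r\le \log_2(g(G)-2)-1$. Then every graph in $M^k_r(G)$ is a tree.
   Context: $g(G)$ is the girth of $G$. Colors are red, blue, green. A $k$-precolored graph is a finite graph together with an assignment of colors to at most $k$ of its vertices. The game $\mathcal{G}^k_r(H)$ on a $k$-precolored graph $H$ starts from the given precoloring and lasts $r$ rounds; in each round Spoiler may erase the colors of some currently colored vertices and then selects a vertex, which Duplicator colors with one of the three colors; after each round at most $k$ vertices may be colored. Duplicator wins if the initial partial coloring and the partial coloring after each round are proper; otherwise Spoiler wins. A subgraph $H'$ of a $k$-precolored graph $H$ is a subgraph of the underlying graph in which every vertex colored in $H'$ has the same color in $H$; it is proper if $H'\ne H$ as precolored graphs. $M^k_r$ is the family of all $k$-precolored graphs $H$ such that Spoiler wins $\mathcal{G}^k_r(H)$ while Duplicator wins $\mathcal{G}^k_r(K)$ for every proper subgraph $K$ of $H$. $M^k_r(G)$ is the set of those members of $M^k_r$ whose underlying uncolored graph is isomorphic to a subgraph of $G$. *)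

theory Defs
  imports Complex_Main
begin

datatype color = Red | Blue | Green

definition is_graph :: "'v set \<Rightarrow> 'v set set \<Rightarrow> bool" where
  "is_graph V E \<longleftrightarrow> finite V \<and> (\<forall>e\<in>E. \<exists>u v. u \<noteq> v \<and> u \<in> V \<and> v \<in> V \<and> e = {u, v})"

definition is_walk :: "'v set set \<Rightarrow> 'v list \<Rightarrow> bool" where
  "is_walk E xs \<longleftrightarrow> xs \<noteq> [] \<and> (\<forall>i < length xs - 1. {xs ! i, xs ! (i + 1)} \<in> E)"

definition is_cycle :: "'v set set \<Rightarrow> 'v list \<Rightarrow> bool" where
  "is_cycle E xs \<longleftrightarrow> length xs \<ge> 3 \<and> distinct xs \<and> is_walk E xs \<and> {last xs, hd xs} \<in> E"

definition has_cycle :: "'v set \<Rightarrow> 'v set set \<Rightarrow> bool" where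
  "has_cycle V E \<longleftrightarrow> (\<exists>xs. set xs \<subseteq> V \<and> is_cycle E xs)"

definition girth :: "'v set \<Rightarrow> 'v set set \<Rightarrow> nat" where
  "girth V E = (LEAST n. \<exists>xs. set xs \<subseteq> V \<and> is_cycle E xs \<and> length xs = n)"

definition connected_graph :: "'v set \<Rightarrow> 'v set set \<Rightarrow> bool" where
  "connected_graph V E \<longleftrightarrow>
     (\<forall>u\<in>V. \<forall>v\<in>V. \<exists>xs. is_walk E xs \<and> set xs \<subseteq> V \<and> hd xs = u \<and> last xs = v)"

definition is_tree :: "'v set \<Rightarrow> 'v set set \<Rightarrow> bool" where
  "is_tree V E \<longleftrightarrow> V \<noteq> {} \<and> connected_graph V E \<and> \<not> has_cycle V E"

type_synonym 'v pcgraph = "'v set \<times> 'v set set \<times> ('v \<Rightarrow> color option)"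

definition precolored :: "nat \<Rightarrow> 'v pcgraph \<Rightarrow> bool" where
  "precolored k H \<longleftrightarrow> (case H of (V, E, c) \<Rightarrow> is_graph V E \<and> dom c \<subseteq> V \<and> card (dom c) \<le> k)"

definition proper_col :: "'v set set \<Rightarrow> ('v \<Rightarrow> color option) \<Rightarrow> bool" where
  "proper_col E c \<longleftrightarrow>
     (\<forall>u v. {u, v} \<in> E \<longrightarrow> u \<noteq> v \<longrightarrow> c u \<noteq> None \<longrightarrow> c v \<noteq> None \<longrightarrow> c u \<noteq> c v)"

text \<open>dwins V E k r c: Duplicator wins the game with r rounds remaining from partial colouring c.
  In a round Spoiler erases a set S of coloured vertices and selects a vertex v (such that at most
  k vertices are coloured afterwards); Duplicator colours v.\<close>
fun dwins :: "'v set \<Rightarrow> 'v set set \<Rightarrow> nat \<Rightarrow> nat \<Rightarrow> ('v \<Rightarrow> color option) \<Rightarrow> bool" where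
  "dwins V E k 0 c = proper_col E c"
| "dwins V E k (Suc r) c =
     (proper_col E c \<and>
      (\<forall>S v. S \<subseteq> dom c \<and> v \<in> V \<and> card ((dom c - S) \<union> {v}) \<le> k \<longrightarrow>
         (\<exists>col. dwins V E k r ((c |` (- S))(v \<mapsto> col)))))"

definition duplicator_wins :: "nat \<Rightarrow> nat \<Rightarrow> 'v pcgraph \<Rightarrow> bool" where
  "duplicator_wins k r H = (case H of (V, E, c) \<Rightarrow> dwins V E k r c)"

definition spoiler_wins :: "nat \<Rightarrow> nat \<Rightarrow> 'v pcgraph \<Rightarrow> bool" where
  "spoiler_wins k r H \<longleftrightarrow> \<not> duplicator_wins k r H"

definition pc_subgraph :: "'v pcgraph \<Rightarrow> 'v pcgraph \<Rightarrow> bool" where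
  "pc_subgraph K H \<longleftrightarrow> (case K of (V', E', c') \<Rightarrow> case H of (V, E, c) \<Rightarrow>
     is_graph V' E' \<and> dom c' \<subseteq> V' \<and> V' \<subseteq> V \<and> E' \<subseteq> E \<and> c' \<subseteq>\<^sub>m c)"

definition in_M :: "nat \<Rightarrow> nat \<Rightarrow> 'v pcgraph \<Rightarrow> bool" where
  "in_M k r H \<longleftrightarrow> precolored k H \<and> spoiler_wins k r H \<and>
     (\<forall>K. pc_subgraph K H \<and> K \<noteq> H \<longrightarrow> duplicator_wins k r K)"

definition iso_to_subgraph :: "'b set \<Rightarrow> 'b set set \<Rightarrow> 'a set \<Rightarrow> 'a set set \<Rightarrow> bool" where
  "iso_to_subgraph V E VG EG \<longleftrightarrow> (\<exists>f. inj_on f V \<and> f ` V \<subseteq> VG \<and> (\<forall>e\<in>E. f ` e \<in> EG))"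

definition in_M_of :: "nat \<Rightarrow> nat \<Rightarrow> 'a set \<Rightarrow> 'a set set \<Rightarrow> 'b pcgraph \<Rightarrow> bool" where
  "in_M_of k r VG EG H \<longleftrightarrow> in_M k r H \<and> (case H of (V, E, c) \<Rightarrow> iso_to_subgraph V E VG EG)"

end

theory Submission
  imports Defs
begin


lemma dwins_proper: "dwins V E k r c \<Longrightarrow> proper_col E c"
  by (cases r) auto

lemma dwins_SucD: "dwins V E k (Suc r) c \<Longrightarrow> S \<subseteq> dom c \<Longrightarrow> v \<in> V \<Longrightarrow>
   card (dom c - S \<union> {v}) \<le> k \<Longrightarrow> \<exists>col. dwins V E k r ((c |` (- S))(v \<mapsto> col))"
  unfolding dwins.simps(2)[of V E k r c] by blast

lemma dwins_Suc_mono: "dwins V E k (Suc r) c \<Longrightarrow> dwins V E k r c"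
proof (induction r arbitrary: c)
  case 0 then show ?case by simp
next
  case (Suc r)
  show ?case
    unfolding dwins.simps(2)[of V E k r c]
    using dwins_proper[OF Suc.prems] dwins_SucD[OF Suc.prems] Suc.IH by blast
qed

lemma dwins_erase: "dwins V E k r c \<Longrightarrow> c' \<subseteq>\<^sub>m c \<Longrightarrow> dwins V E k r c'"
proof (induction r arbitrary: c c')
  case 0
  then show ?case unfolding dwins.simps proper_col_def map_le_def
    by (metis domIff)
next
  case (Suc r)
  have pc: "proper_col E c'" using dwins_proper[OF Suc.prems(1)] Suc.prems(2)
    unfolding proper_col_def map_le_def by (metis domIff)
  show ?case
  proof (simp only: dwins.simps, intro conjI pc allI impI)
    fix S v assume a: "S \<subseteq> dom c' \<and> v \<in> V \<and> card (dom c' - S \<union> {v}) \<le> k"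
    define S2 where "S2 = S \<union> (dom c - dom c')"
    have dc: "dom c' \<subseteq> dom c" using Suc.prems(2) by (simp add: map_le_implies_dom_le)
    have eq: "dom c - S2 = dom c' - S" using dc a unfolding S2_def by auto
    have "S2 \<subseteq> dom c \<and> v \<in> V \<and> card (dom c - S2 \<union> {v}) \<le> k"
    proof (intro conjI)
      show "S2 \<subseteq> dom c" using a dc unfolding S2_def by blast
      show "v \<in> V" using a by simp
      show "card (dom c - S2 \<union> {v}) \<le> k" using a eq by simp
    qed
    then obtain col where col: "dwins V E k r ((c |` (- S2))(v \<mapsto> col))"
      using dwins_SucD[OF Suc.prems(1)] by blast
    have "(c' |` (- S))(v \<mapsto> col) \<subseteq>\<^sub>m (c |` (- S2))(v \<mapsto> col)"
      using Suc.prems(2) unfolding map_le_def S2_def restrict_map_def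
      by (auto simp: domIff split: if_splits) (metis domI option.distinct(1))
    then show "\<exists>col. dwins V E k r ((c' |` (- S))(v \<mapsto> col))"
      using Suc.IH col by blast
  qed
qed

lemma dwins_sub: "dwins V E k r c \<Longrightarrow> V' \<subseteq> V \<Longrightarrow> E' \<subseteq> E \<Longrightarrow> dwins V' E' k r (c |` V')"
proof (induction r arbitrary: c)
  case 0
  then show ?case unfolding dwins.simps proper_col_def restrict_map_def
    by (auto split: if_splits)
next
  case (Suc r)
  have pc: "proper_col E' (c |` V')" using dwins_proper[OF Suc.prems(1)] Suc.prems(3)
    unfolding proper_col_def restrict_map_def by (auto split: if_splits)
  show ?case
  proof (simp only: dwins.simps, intro conjI pc allI impI)
    fix S v assume a: "S \<subseteq> dom (c |` V') \<and> v \<in> V' \<and> card (dom (c |` V') - S \<union> {v}) \<le> k"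
    define S2 where "S2 = S \<union> (dom c - V')"
    have eq: "dom c - S2 = dom (c |` V') - S" unfolding S2_def by auto
    have "S2 \<subseteq> dom c \<and> v \<in> V \<and> card (dom c - S2 \<union> {v}) \<le> k"
      using a Suc.prems(2) eq unfolding S2_def by auto
    then obtain col where col: "dwins V E k r ((c |` (- S2))(v \<mapsto> col))"
      using dwins_SucD[OF Suc.prems(1)] by blast
    have "((c |` (- S2))(v \<mapsto> col)) |` V' = ((c |` V') |` (- S))(v \<mapsto> col)"
      using a unfolding S2_def restrict_map_def by (auto simp: fun_eq_iff)
    then show "\<exists>col. dwins V' E' k r ((c |` V' |` (- S))(v \<mapsto> col))"
      using Suc.IH[OF col Suc.prems(2,3)] by metis
  qed
qed



lemma successively_nth: "successively P xs \<longleftrightarrow> (\<forall>i < length xs - 1. P (xs ! i) (xs ! Suc i))"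
proof (induction P xs rule: successively.induct)
  case (3 P x y xs)
  show ?case
  proof
    assume "successively P (x # y # xs)"
    then have "P x y" "\<forall>i<length (y # xs) - 1. P ((y # xs) ! i) ((y # xs) ! Suc i)" using 3 by auto
    then show "\<forall>i<length (x # y # xs) - 1. P ((x # y # xs) ! i) ((x # y # xs) ! Suc i)"
      by (metis Suc_less_eq Suc_pred diff_Suc_1 length_Cons not_gr0 nth_Cons_0 nth_Cons_Suc)
  next
    assume h: "\<forall>i<length (x # y # xs) - 1. P ((x # y # xs) ! i) ((x # y # xs) ! Suc i)"
    then have "P x y" by (metis length_Cons nth_Cons_0 nth_Cons_Suc zero_less_Suc diff_Suc_1)
    moreover have "\<forall>i<length (y # xs) - 1. P ((y # xs) ! i) ((y # xs) ! Suc i)"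
    proof (intro allI impI)
      fix i assume "i < length (y # xs) - 1"
      then have "Suc i < length (x # y # xs) - 1" by simp
      then show "P ((y # xs) ! i) ((y # xs) ! Suc i)" using h by fastforce
    qed
    ultimately show "successively P (x # y # xs)" using 3 by simp
  qed
qed auto

lemma is_walk_succ: "is_walk E xs \<longleftrightarrow> xs \<noteq> [] \<and> successively (\<lambda>x y. {x, y} \<in> E) xs"
  unfolding is_walk_def successively_nth by simp

lemma walk_join:
  assumes "is_walk E ys" "is_walk E xs" "hd xs = hd ys"
  shows "is_walk E (rev ys @ tl xs) \<and> hd (rev ys @ tl xs) = last ys \<and> last (rev ys @ tl xs) = last xs
     \<and> length (rev ys @ tl xs) = length ys + length xs - 1 \<and> set (rev ys @ tl xs) \<subseteq> set ys \<union> set xs"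
proof -
  have ne: "ys \<noteq> []" "xs \<noteq> []" using assms unfolding is_walk_def by auto
  have s1: "successively (\<lambda>x y. {x, y} \<in> E) (rev ys)"
    using assms(1) unfolding is_walk_succ by (simp add: insert_commute)
  have s2: "successively (\<lambda>x y. {x, y} \<in> E) xs" using assms(2) unfolding is_walk_succ by simp
  obtain a xs' where xs: "xs = a # xs'" using ne by (cases xs) auto
  have s3: "successively (\<lambda>x y. {x, y} \<in> E) xs'" using s2 xs by (auto simp: successively_Cons)
  have "successively (\<lambda>x y. {x, y} \<in> E) (rev ys @ xs')"
    unfolding successively_append_iff using s1 s2 s3 xs assms(3) ne
    by (auto simp: successively_Cons last_rev)
  moreover have "last (rev ys @ tl xs) = last xs"
    using xs ne assms(3) by (cases xs') (auto simp: last_rev)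
  ultimately show ?thesis using ne xs unfolding is_walk_succ by (auto simp: hd_rev)
qed

lemma walk_edge: "{u, v} \<in> E \<Longrightarrow> is_walk E [u, v]"
  unfolding is_walk_def by (auto simp: less_Suc_eq)

lemma walk_single: "is_walk E [u]"
  unfolding is_walk_def by auto

lemma walk_mono: "is_walk E xs \<Longrightarrow> E \<subseteq> E' \<Longrightarrow> is_walk E' xs"
  unfolding is_walk_def by auto



definition reach :: "'v set set \<Rightarrow> 'v set \<Rightarrow> 'v \<Rightarrow> nat \<Rightarrow> bool" where
  "reach EW VW z n \<longleftrightarrow> (\<forall>x\<in>VW. \<exists>xs. is_walk EW xs \<and> set xs \<subseteq> VW \<and> hd xs = z \<and> last xs = x \<and> length xs \<le> Suc n)"

definition wit :: "'v set \<Rightarrow> 'v set set \<Rightarrow> nat \<Rightarrow> nat \<Rightarrow> ('v \<Rightarrow> color option) \<Rightarrow> 'v set \<Rightarrow> 'v set set \<Rightarrow> 'v \<Rightarrow> bool" where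
  "wit V E k r c VW EW z \<longleftrightarrow> VW \<subseteq> V \<and> EW \<subseteq> E \<and> (\<forall>e\<in>EW. e \<subseteq> VW) \<and> z \<in> VW \<and>
     reach EW VW z (2^r) \<and> \<not> dwins VW EW k r (c |` VW)"

lemma wit_D: assumes "wit V E k r c VW EW z"
  shows "VW \<subseteq> V" "EW \<subseteq> E" "\<forall>e\<in>EW. e \<subseteq> VW" "z \<in> VW" "reach EW VW z (2^r)" "\<not> dwins VW EW k r (c |` VW)"
  using assms unfolding wit_def by blast+

lemma reach_mono: "reach EW VW z n \<Longrightarrow> n \<le> m \<Longrightarrow> reach EW VW z m"
  unfolding reach_def by (meson le_trans not_less_eq_eq)

lemma improper_wit:
  assumes "\<not> proper_col E c" "is_graph V E"
  shows "\<exists>VW EW z. wit V E k r c VW EW z"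
proof -
  obtain u v where uv: "{u, v} \<in> E" "u \<noteq> v" "c u \<noteq> None" "c v \<noteq> None" "c u = c v"
    using assms(1) unfolding proper_col_def by blast
  obtain a b where ab: "a \<in> V" "b \<in> V" "{u, v} = {a, b}" using uv(1) assms(2) unfolding is_graph_def by blast
  have inV: "u \<in> V" "v \<in> V" using ab by (auto simp: doubleton_eq_iff)
  have "\<not> proper_col {{u, v}} (c |` {u, v})"
    unfolding proper_col_def
  proof (intro notI)
    assume "\<forall>a b. {a, b} \<in> {{u, v}} \<longrightarrow> a \<noteq> b \<longrightarrow> (c |` {u, v}) a \<noteq> None \<longrightarrow> (c |` {u, v}) b \<noteq> None \<longrightarrow> (c |` {u, v}) a \<noteq> (c |` {u, v}) b"
    from this[rule_format, of u v] uv show False by simp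
  qed
  then have nd: "\<not> dwins {u, v} {{u, v}} k r (c |` {u, v})" using dwins_proper by blast
  have "reach {{u, v}} {u, v} u (2^r)"
    unfolding reach_def
  proof
    fix x assume "x \<in> {u, v}"
    then show "\<exists>xs. is_walk {{u, v}} xs \<and> set xs \<subseteq> {u, v} \<and> hd xs = u \<and> last xs = x \<and> length xs \<le> Suc (2 ^ r)"
    proof
      assume "x = u" then show ?thesis by (intro exI[of _ "[u]"]) (simp add: walk_single)
    next
      assume "x \<in> {v}" then show ?thesis
        by (intro exI[of _ "[u, v]"]) (simp add: walk_edge)
    qed
  qed
  then have "wit V E k r c {u, v} {{u, v}} u"
    unfolding wit_def using nd inV uv(1) by simp
  then show ?thesis by blast
qed

lemma witness:
  assumes "is_graph V E" "dom c \<subseteq> V" "\<not> dwins V E k r c"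
  shows "\<exists>VW EW z. wit V E k r c VW EW z"
  using assms(2,3)
proof (induction r arbitrary: c)
  case 0
  then show ?case using improper_wit[OF _ assms(1)] by simp
next
  case (Suc r)
  show ?case
  proof (cases "proper_col E c")
    case False
    then show ?thesis using improper_wit[OF _ assms(1)] by blast
  next
    case True
    then obtain S v where Sv: "S \<subseteq> dom c" "v \<in> V" "card (dom c - S \<union> {v}) \<le> k"
      and lose: "\<forall>col. \<not> dwins V E k r ((c |` (- S))(v \<mapsto> col))"
      using Suc.prems(2) unfolding dwins.simps(2)[of V E k r c] by blast
    define cc where "cc col = (c |` (- S))(v \<mapsto> col)" for col
    have "\<forall>col. \<exists>VW EW z. wit V E k r (cc col) VW EW z"
    proof
      fix col
      have "dom (cc col) \<subseteq> V" using Suc.prems(1) Sv(2) unfolding cc_def by auto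
      then show "\<exists>VW EW z. wit V E k r (cc col) VW EW z" using Suc.IH lose unfolding cc_def by blast
    qed
    then have "\<forall>col. \<exists>t. wit V E k r (cc col) (fst t) (fst (snd t)) (snd (snd t))" by simp
    then obtain tf where tf: "\<forall>col. wit V E k r (cc col) (fst (tf col)) (fst (snd (tf col))) (snd (snd (tf col)))"
      by (rule choice[THEN exE]) blast
    define Vf where "Vf col = fst (tf col)" for col
    define Ef where "Ef col = fst (snd (tf col))" for col
    define zf where "zf col = snd (snd (tf col))" for col
    have W: "\<And>col. wit V E k r (cc col) (Vf col) (Ef col) (zf col)"
      using tf unfolding Vf_def Ef_def zf_def by blast
    show ?thesis
    proof (cases "\<exists>col. v \<notin> Vf col")
      case True
      then obtain col where col: "v \<notin> Vf col" by blast
      have "\<not> dwins (Vf col) (Ef col) k (Suc r) (c |` Vf col)"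
      proof
        assume "dwins (Vf col) (Ef col) k (Suc r) (c |` Vf col)"
        then have d: "dwins (Vf col) (Ef col) k r (c |` Vf col)" by (rule dwins_Suc_mono)
        have "cc col |` Vf col \<subseteq>\<^sub>m c |` Vf col"
          using col unfolding cc_def map_le_def restrict_map_def by (auto split: if_splits)
        then have "dwins (Vf col) (Ef col) k r (cc col |` Vf col)" using dwins_erase[OF d] by blast
        then show False using W[of col] unfolding wit_def by blast
      qed
      moreover have "reach (Ef col) (Vf col) (zf col) (2 ^ Suc r)"
      proof -
        have h1: "(2::nat)^r \<le> 2 ^ Suc r" by simp
        have h2: "reach (Ef col) (Vf col) (zf col) (2 ^ r)" using wit_D(5)[OF W[of col]] .
        show ?thesis by (rule reach_mono[OF h2 h1])
      qed
      moreover have "Vf col \<subseteq> V \<and> Ef col \<subseteq> E \<and> (\<forall>e\<in>Ef col. e \<subseteq> Vf col) \<and> zf col \<in> Vf col"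
        using wit_D[OF W[of col]] by blast
      ultimately have "wit V E k (Suc r) c (Vf col) (Ef col) (zf col)"
        unfolding wit_def by simp
      then show ?thesis by blast
    next
      case False
      then have vin: "\<And>col. v \<in> Vf col" by blast
      define VW where "VW = (\<Union>col. Vf col)"
      define EW where "EW = (\<Union>col. Ef col)"
      have VWV: "VW \<subseteq> V" and EWE: "EW \<subseteq> E" and eW: "\<forall>e\<in>EW. e \<subseteq> VW"
        using W unfolding wit_def VW_def EW_def by blast+
      have vVW: "v \<in> VW" using vin unfolding VW_def by blast
      have reachW: "reach EW VW v (2 ^ Suc r)"
        unfolding reach_def
      proof
        fix x assume "x \<in> VW"
        then obtain col where x: "x \<in> Vf col" unfolding VW_def by blast
        have r1: "reach (Ef col) (Vf col) (zf col) (2^r)" using W[of col] unfolding wit_def by blast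
        obtain xs where xs: "is_walk (Ef col) xs" "set xs \<subseteq> Vf col" "hd xs = zf col" "last xs = x" "length xs \<le> Suc (2^r)"
          using r1 x unfolding reach_def by blast
        obtain ys where ys: "is_walk (Ef col) ys" "set ys \<subseteq> Vf col" "hd ys = zf col" "last ys = v" "length ys \<le> Suc (2^r)"
          using r1 vin unfolding reach_def by blast
        have j: "is_walk (Ef col) (rev ys @ tl xs) \<and> hd (rev ys @ tl xs) = last ys \<and> last (rev ys @ tl xs) = last xs
     \<and> length (rev ys @ tl xs) = length ys + length xs - 1 \<and> set (rev ys @ tl xs) \<subseteq> set ys \<union> set xs"
          using walk_join[OF ys(1) xs(1)] xs(3) ys(3) by simp
        have "Ef col \<subseteq> EW" "Vf col \<subseteq> VW" unfolding EW_def VW_def by blast+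
        then show "\<exists>xs. is_walk EW xs \<and> set xs \<subseteq> VW \<and> hd xs = v \<and> last xs = x \<and> length xs \<le> Suc (2 ^ Suc r)"
        proof (intro exI[of _ "rev ys @ tl xs"] conjI)
          show "is_walk EW (rev ys @ tl xs)" using j walk_mono \<open>Ef col \<subseteq> EW\<close> by blast
          show "set (rev ys @ tl xs) \<subseteq> VW" using j xs(2) ys(2) \<open>Vf col \<subseteq> VW\<close> by blast
          show "hd (rev ys @ tl xs) = v" using j ys by simp
          show "last (rev ys @ tl xs) = x" using j xs by simp
          show "length (rev ys @ tl xs) \<le> Suc (2 ^ Suc r)" using j xs(5) ys(5) by simp
        qed
      qed
      have "\<not> dwins VW EW k (Suc r) (c |` VW)"
      proof
        assume d: "dwins VW EW k (Suc r) (c |` VW)"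
        have fin: "finite V" using assms(1) unfolding is_graph_def by blast
        have sub: "dom (c |` VW) - (S \<inter> VW) \<union> {v} \<subseteq> dom c - S \<union> {v}" by auto
        have "card (dom (c |` VW) - (S \<inter> VW) \<union> {v}) \<le> card (dom c - S \<union> {v})"
          by (rule card_mono[OF _ sub]) (use Suc.prems(1) fin finite_subset in blast)
        then have "card (dom (c |` VW) - (S \<inter> VW) \<union> {v}) \<le> k" using Sv(3) by linarith
        moreover have "S \<inter> VW \<subseteq> dom (c |` VW)" using Sv(1) by auto
        ultimately obtain col where dc: "dwins VW EW k r ((c |` VW |` (- (S \<inter> VW)))(v \<mapsto> col))"
          using dwins_SucD[OF d _ vVW] by blast
        have eq: "(c |` VW |` (- (S \<inter> VW)))(v \<mapsto> col) = cc col |` VW"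
          using vVW unfolding cc_def restrict_map_def by (auto simp: fun_eq_iff)
        have "Vf col \<subseteq> VW" "Ef col \<subseteq> EW" unfolding EW_def VW_def by blast+
        then have "dwins (Vf col) (Ef col) k r ((cc col |` VW) |` Vf col)"
          using dwins_sub dc eq by metis
        moreover have "(cc col |` VW) |` Vf col = cc col |` Vf col"
          using \<open>Vf col \<subseteq> VW\<close> unfolding restrict_map_def by (auto simp: fun_eq_iff)
        ultimately show False using W[of col] unfolding wit_def by simp
      qed
      then have "wit V E k (Suc r) c VW EW v"
        using VWV EWE eW vVW reachW unfolding wit_def by blast
      then show ?thesis by blast
    qed
  qed
qed



lemma walk_snoc: "is_walk E xs \<Longrightarrow> {last xs, x} \<in> E \<Longrightarrow> is_walk E (xs @ [x])"
  unfolding is_walk_succ by (auto simp: successively_append_iff)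

lemma walk_butlast:
  assumes "is_walk E xs" "length xs \<ge> 2"
  shows "is_walk E (butlast xs) \<and> {last (butlast xs), last xs} \<in> E \<and> hd (butlast xs) = hd xs"
proof -
  have "xs \<noteq> []" using assms(2) by auto
  then obtain ys x where xs: "xs = ys @ [x]" by (cases xs rule: rev_cases) auto
  have ys: "ys \<noteq> []" using assms(2) xs by auto
  show ?thesis using assms(1) ys unfolding xs is_walk_succ
    by (auto simp: successively_append_iff)
qed

lemma succ_upt: "(\<And>t. Suc t < n \<Longrightarrow> P (f t) (f (Suc t))) \<Longrightarrow> successively P (map f [0..<n])"
  unfolding successively_nth by auto

locale dist_ctx =
  fixes V :: "'v set" and E :: "'v set set" and z :: 'v and R :: nat
  assumes reach: "reach E V z R"
    and edges: "\<forall>e\<in>E. e \<subseteq> V"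
begin

definition d :: "'v \<Rightarrow> nat" where
  "d x = (LEAST n. \<exists>xs. is_walk E xs \<and> hd xs = z \<and> last xs = x \<and> length xs = Suc n)"

lemma d_ex: assumes "x \<in> V"
  shows "\<exists>xs. is_walk E xs \<and> hd xs = z \<and> last xs = x \<and> length xs = Suc (d x)"
proof -
  obtain xs where xs: "is_walk E xs" "hd xs = z" "last xs = x" "length xs \<le> Suc R"
    using reach assms unfolding reach_def by blast
  have "xs \<noteq> []" using xs(1) unfolding is_walk_def by auto
  then have "\<exists>n. \<exists>xs. is_walk E xs \<and> hd xs = z \<and> last xs = x \<and> length xs = Suc n"
    using xs by (intro exI[of _ "length xs - 1"] exI[of _ xs]) auto
  then show ?thesis unfolding d_def by (rule LeastI_ex)
qed

lemma d_le: assumes "is_walk E xs" "hd xs = z" "last xs = x" "length xs = Suc n"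
  shows "d x \<le> n"
  unfolding d_def by (rule Least_le) (use assms in blast)

lemma d_R: assumes "x \<in> V" shows "d x \<le> R"
proof -
  obtain xs where xs: "is_walk E xs" "hd xs = z" "last xs = x" "length xs \<le> Suc R"
    using reach assms unfolding reach_def by blast
  have "xs \<noteq> []" using xs(1) unfolding is_walk_def by auto
  then have "d x \<le> length xs - 1" using xs by (intro d_le[of xs]) auto
  then show ?thesis using xs(4) by linarith
qed

lemma d_zero: assumes "x \<in> V" "d x = 0" shows "x = z"
proof -
  obtain xs where "is_walk E xs" "hd xs = z" "last xs = x" "length xs = Suc (d x)"
    using d_ex[OF assms(1)] by blast
  then show ?thesis using assms(2) by (cases xs) auto
qed

lemma d_edge: assumes "{x, y} \<in> E" "y \<in> V" shows "d x \<le> Suc (d y)"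
proof -
  obtain ys where ys: "is_walk E ys" "hd ys = z" "last ys = y" "length ys = Suc (d y)"
    using d_ex[OF assms(2)] by blast
  have "is_walk E (ys @ [x])" using walk_snoc[OF ys(1)] ys(3) assms(1) by (simp add: insert_commute)
  moreover have "ys \<noteq> []" using ys(1) unfolding is_walk_def by auto
  ultimately show ?thesis using ys by (intro d_le[of "ys @ [x]"]) auto
qed

lemma d_step: assumes "x \<in> V" "d x = Suc n"
  shows "\<exists>y. y \<in> V \<and> {y, x} \<in> E \<and> d y = n"
proof -
  obtain xs where xs: "is_walk E xs" "hd xs = z" "last xs = x" "length xs = Suc (d x)"
    using d_ex[OF assms(1)] by blast
  have l: "length xs \<ge> 2" using xs(4) assms(2) by simp
  note b = walk_butlast[OF xs(1) l]
  define y where "y = last (butlast xs)"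
  have e: "{y, x} \<in> E" using b xs(3) unfolding y_def by simp
  have yV: "y \<in> V" using e edges by blast
  have "butlast xs \<noteq> []" using l by (cases xs rule: rev_cases) auto
  have "d y \<le> n" using b xs assms(2) unfolding y_def by (intro d_le[of "butlast xs"]) auto
  moreover have "d x \<le> Suc (d y)" using d_edge[OF _ yV] e by (simp add: insert_commute)
  ultimately show ?thesis using yV e assms(2) by (intro exI[of _ y]) auto
qed

definition p :: "'v \<Rightarrow> 'v" where
  "p x = (SOME y. y \<in> V \<and> {y, x} \<in> E \<and> d y = d x - 1)"

lemma p_prop: assumes "x \<in> V" "d x > 0"
  shows "p x \<in> V \<and> {p x, x} \<in> E \<and> d (p x) = d x - 1"
proof -
  obtain n where "d x = Suc n" using assms(2) gr0_implies_Suc by blast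
  then have "\<exists>y. y \<in> V \<and> {y, x} \<in> E \<and> d y = d x - 1" using d_step[OF assms(1)] by simp
  then show ?thesis unfolding p_def by (rule someI_ex)
qed

lemma chain: assumes "a \<in> V" "i \<le> d a"
  shows "(p ^^ i) a \<in> V \<and> d ((p ^^ i) a) = d a - i"
  using assms(2)
proof (induction i)
  case 0 then show ?case using assms(1) by simp
next
  case (Suc i)
  then have h: "(p ^^ i) a \<in> V" "d ((p ^^ i) a) = d a - i" by auto
  have "d ((p ^^ i) a) > 0" using h(2) Suc.prems by simp
  then show ?case using p_prop[OF h(1)] h(2) by simp
qed

lemma chain_edge: assumes "a \<in> V" "Suc i \<le> d a"
  shows "{(p ^^ Suc i) a, (p ^^ i) a} \<in> E"
proof -
  have h: "(p ^^ i) a \<in> V" "d ((p ^^ i) a) = d a - i" using chain[OF assms(1)] assms(2) by auto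
  have "d ((p ^^ i) a) > 0" using h(2) assms(2) by simp
  then show ?thesis using p_prop[OF h(1)] by simp
qed

lemma chain_end: assumes "a \<in> V" shows "(p ^^ d a) a = z"
  using chain[OF assms order_refl] d_zero by simp

lemma nonparent_cycle:
  assumes aV: "a \<in> V" and bV: "b \<in> V" and e: "{a, b} \<in> E" and ab: "a \<noteq> b"
    and np1: "\<not> (0 < d a \<and> p a = b)" and np2: "\<not> (0 < d b \<and> p b = a)"
  shows "\<exists>ys. set ys \<subseteq> V \<and> is_cycle E ys \<and> length ys \<le> 2 * R + 1"
proof -
  define A where "A i = (p ^^ i) a" for i
  define B where "B j = (p ^^ j) b" for j
  define Q where "Q i = (\<exists>j \<le> d b. A i = B j)" for i
  have Qa: "Q (d a)" unfolding Q_def A_def B_def using chain_end[OF aV] chain_end[OF bV] by auto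
  define i0 where "i0 = (LEAST i. Q i)"
  have i0a: "i0 \<le> d a" unfolding i0_def by (rule Least_le) (rule Qa)
  have "Q i0" unfolding i0_def by (rule LeastI) (rule Qa)
  then obtain j0 where j0: "j0 \<le> d b" "A i0 = B j0" unfolding Q_def by blast
  have min: "\<not> Q i" if "i < i0" for i using not_less_Least[of i Q] that unfolding i0_def by blast
  have dA: "A i \<in> V \<and> d (A i) = d a - i" if "i \<le> d a" for i using chain[OF aV that] unfolding A_def .
  have dB: "B j \<in> V \<and> d (B j) = d b - j" if "j \<le> d b" for j using chain[OF bV that] unfolding B_def .
  have eA: "{A i, A (Suc i)} \<in> E" if "Suc i \<le> d a" for i
    using chain_edge[OF aV that] unfolding A_def by (simp add: insert_commute)
  have eB: "{B (Suc i), B i} \<in> E" if "Suc i \<le> d b" for i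
    using chain_edge[OF bV that] unfolding B_def by simp
  define xs where "xs = map A [0..<Suc i0]"
  define ys where "ys = rev (map B [0..<j0])"
  define cyc where "cyc = xs @ ys"
  have A0: "A 0 = a" and B0: "B 0 = b" unfolding A_def B_def by simp_all
  have len: "length cyc = Suc i0 + j0" unfolding cyc_def xs_def ys_def by simp
  have len3: "length cyc \<ge> 3"
  proof (rule ccontr)
    assume "\<not> 3 \<le> length cyc"
    then have "i0 + j0 \<le> 1" using len by simp
    then consider "i0 = 0" "j0 = 0" | "i0 = 1" "j0 = 0" | "i0 = 0" "j0 = 1" by linarith
    then show False
    proof cases
      case 1 then show False using j0(2) A0 B0 ab by simp
    next
      case 2 then have "p a = b" using j0(2) B0 unfolding A_def by simp
      then show False using np1 i0a 2 by simp
    next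
      case 3 then have "p b = a" using j0(2) A0 unfolding B_def by simp
      then show False using np2 j0(1) 3 by simp
    qed
  qed
  have lenR: "length cyc \<le> 2 * R + 1" using len i0a j0(1) d_R[OF aV] d_R[OF bV] by linarith
  have setV: "set cyc \<subseteq> V" unfolding cyc_def xs_def ys_def using dA dB i0a j0(1) by auto
  have dx: "distinct xs" unfolding xs_def
  proof (rule distinct_map[THEN iffD2], intro conjI inj_onI)
    fix s t assume "s \<in> set [0..<Suc i0]" "t \<in> set [0..<Suc i0]" "A s = A t"
    then show "s = t" using dA[of s] dA[of t] i0a by auto
  qed simp
  have dy: "distinct ys" unfolding ys_def distinct_rev
  proof (rule distinct_map[THEN iffD2], intro conjI inj_onI)
    fix s t assume "s \<in> set [0..<j0]" "t \<in> set [0..<j0]" "B s = B t"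
    then show "s = t" using dB[of s] dB[of t] j0(1) by auto
  qed simp
  have disj: "set xs \<inter> set ys = {}"
  proof (rule ccontr)
    assume "set xs \<inter> set ys \<noteq> {}"
    then obtain x where "x \<in> set xs" "x \<in> set ys" by blast
    then obtain s t where st: "s \<le> i0" "t < j0" "A s = B t" unfolding xs_def ys_def
      by (auto simp: less_Suc_eq_le) (metis order_refl, metis less_imp_le)
    show False
    proof (cases "s < i0")
      case True
      have "t \<le> d b" using st(2) j0(1) by simp
      then show False using min[OF True] st unfolding Q_def by auto
    next
      case False then have "s = i0" using st by simp
      then have "B t = B j0" using st j0 by simp
      then show False using dB[of t] dB[of j0] j0(1) st(2) by auto
    qed
  qed
  have dist: "distinct cyc" unfolding cyc_def using dx dy disj by simp
  have wx: "successively (\<lambda>x y. {x, y} \<in> E) xs" unfolding xs_def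
    by (rule succ_upt) (use eA i0a in auto)
  have wy: "successively (\<lambda>x y. {x, y} \<in> E) ys" unfolding ys_def successively_rev
    by (rule succ_upt) (use eB j0(1) in auto)
  have lastx: "last xs = A i0" unfolding xs_def by simp
  have junc: "ys = [] \<or> {last xs, hd ys} \<in> E"
  proof (cases j0)
    case 0 then show ?thesis unfolding ys_def by simp
  next
    case (Suc j1)
    then have "hd ys = B j1" unfolding ys_def by (simp add: hd_rev)
    then show ?thesis using lastx j0 eB[of j1] Suc by (simp add: insert_commute)
  qed
  have walk: "is_walk E cyc" unfolding is_walk_succ cyc_def successively_append_iff
    using wx wy junc unfolding xs_def by simp
  have "xs = A 0 # map A [1..<Suc i0]" unfolding xs_def by (simp add: upt_rec)
  then have hd: "hd cyc = a" unfolding cyc_def using A0 by simp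
  have last: "last cyc = b"
  proof (cases j0)
    case 0 then show ?thesis unfolding cyc_def ys_def using lastx j0(2) B0 by simp
  next
    case (Suc j1)
    then have "map B [0..<j0] = B 0 # map B [1..<j0]" by (simp add: upt_rec)
    then show ?thesis unfolding cyc_def ys_def using B0 by (simp add: last_rev)
  qed
  have "is_cycle E cyc" unfolding is_cycle_def using len3 dist walk hd last e by (simp add: insert_commute)
  then show ?thesis using setV lenR by blast
qed


lemma cyc_edge: assumes "is_cycle E xs" "j < length xs"
  shows "{xs ! j, xs ! ((j + 1) mod length xs)} \<in> E"
proof (cases "j + 1 < length xs")
  case True
  then show ?thesis using assms unfolding is_cycle_def is_walk_def by auto
next
  case False
  then have j: "j = length xs - 1" using assms(2) by simp
  have ne: "xs \<noteq> []" using assms(2) by auto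
  have "(j + 1) mod length xs = 0" using j ne by simp
  moreover have "xs ! j = last xs" using j ne by (simp add: last_conv_nth)
  moreover have "xs ! 0 = hd xs" using ne by (simp add: hd_conv_nth)
  ultimately show ?thesis using assms(1) unfolding is_cycle_def by simp
qed

lemma short_cycle:
  assumes g: "is_graph V E" and sV: "set xs \<subseteq> V" and cy: "is_cycle E xs"
  shows "\<exists>ys. set ys \<subseteq> V \<and> is_cycle E ys \<and> length ys \<le> 2 * R + 1"
proof -
  define L where "L = length xs"
  have L3: "L \<ge> 3" and di: "distinct xs" using cy unfolding is_cycle_def L_def by auto
  have ne: "xs \<noteq> []" using L3 unfolding L_def by auto
  define M where "M = Max (d ` set xs)"
  have "M \<in> d ` set xs" unfolding M_def using ne by (intro Max_in) auto
  then obtain x where x: "x \<in> set xs" "d x = M" by blast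
  then obtain m where m: "m < L" "xs ! m = x" unfolding L_def by (metis in_set_conv_nth)
  have maxd: "d y \<le> d x" if "y \<in> set xs" for y using that x(2) unfolding M_def by simp
  define n1 where "n1 = (if m = 0 then L - 1 else m - 1)"
  define n2 where "n2 = (m + 1) mod L"
  have n1L: "n1 < L" and n2L: "n2 < L" unfolding n1_def n2_def using m L3 by auto
  have "(n1 + 1) mod L = m" unfolding n1_def using m L3 by auto
  then have e1: "{xs ! n1, x} \<in> E" using cyc_edge[OF cy n1L[unfolded L_def]] m(2) unfolding L_def by simp
  have e2: "{x, xs ! n2} \<in> E" using cyc_edge[OF cy m(1)[unfolded L_def]] m(2) unfolding n2_def L_def by simp
  have "n1 \<noteq> n2" unfolding n1_def n2_def using m L3
    by (cases "m = 0"; cases "m + 1 < L") (auto simp: mod_if)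
  then have y12: "xs ! n1 \<noteq> xs ! n2" using di n1L n2L unfolding L_def by (simp add: nth_eq_iff_index_eq)
  have xV: "x \<in> V" using x(1) sV by blast
  have edge_ne: "u \<noteq> w" if "{u, w} \<in> E" for u w
    using g that unfolding is_graph_def by (auto simp: doubleton_eq_iff)
  have good: "\<exists>ys. set ys \<subseteq> V \<and> is_cycle E ys \<and> length ys \<le> 2 * R + 1"
    if y: "y \<in> set xs" "{x, y} \<in> E" "\<not> (0 < d x \<and> p x = y)" for y
  proof -
    have yV: "y \<in> V" using y(1) sV by blast
    have "\<not> (0 < d y \<and> p y = x)"
    proof
      assume h: "0 < d y \<and> p y = x"
      then have "d x = d y - 1" using p_prop[OF yV] by simp
      then show False using maxd[OF y(1)] h by arith
    qed
    then show ?thesis using nonparent_cycle[OF xV yV y(2) edge_ne[OF y(2)] y(3)] by blast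
  qed
  have in1: "xs ! n1 \<in> set xs" and in2: "xs ! n2 \<in> set xs" using n1L n2L unfolding L_def by auto
  show ?thesis
  proof (cases "0 < d x \<and> p x = xs ! n1")
    case True
    then have "\<not> (0 < d x \<and> p x = xs ! n2)" using y12 by auto
    then show ?thesis using good[OF in2 e2] by blast
  next
    case False
    then show ?thesis using good[OF in1] e1 by (simp add: insert_commute)
  qed
qed

end



theorem lemma7:
  fixes VG :: "'a set" and EG :: "'a set set"
    and V :: "'b set" and E :: "'b set set" and c :: "'b \<Rightarrow> color option"
    and k r :: nat
  assumes "is_graph VG EG"
    and "has_cycle VG EG"
    and "real r \<le> log 2 (real (girth VG EG) - 2) - 1"
    and "in_M_of k r VG EG (V, E, c)"
  shows "is_tree V E"
proof -
  have inM: "in_M k r (V, E, c)" and iso: "iso_to_subgraph V E VG EG"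
    using assms(4) unfolding in_M_of_def by auto
  have gV: "is_graph V E" and dc: "dom c \<subseteq> V" and lose: "\<not> dwins V E k r c"
    using inM unfolding in_M_def precolored_def spoiler_wins_def duplicator_wins_def by auto
  have minimal: "\<And>K. pc_subgraph K (V, E, c) \<and> K \<noteq> (V, E, c) \<Longrightarrow> duplicator_wins k r K"
    using inM unfolding in_M_def by blast
  obtain f where f: "inj_on f V" "f ` V \<subseteq> VG" "\<forall>e\<in>E. f ` e \<in> EG"
    using iso unfolding iso_to_subgraph_def by blast
  obtain VW EW z where W: "wit V E k r c VW EW z" using witness[OF gV dc lose] by blast
  note WD = wit_D[OF W]
  have finV: "finite V" using gV unfolding is_graph_def by blast
  have gW: "is_graph VW EW"
    unfolding is_graph_def
  proof (intro conjI ballI)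
    show "finite VW" using finV WD(1) finite_subset by blast
    fix e assume eW: "e \<in> EW"
    then have "e \<in> E" using WD(2) by blast
    then obtain u v where uv: "u \<noteq> v" "e = {u, v}" using gV unfolding is_graph_def by blast
    have "u \<in> VW" "v \<in> VW" using WD(3) eW uv(2) by auto
    then show "\<exists>u v. u \<noteq> v \<and> u \<in> VW \<and> v \<in> VW \<and> e = {u, v}" using uv by blast
  qed
  have sub: "pc_subgraph (VW, EW, c |` VW) (V, E, c)"
    unfolding pc_subgraph_def using gW WD(1,2) by (auto simp: map_le_def)
  have eqK: "(VW, EW, c |` VW) = (V, E, c)"
  proof (rule ccontr)
    assume "(VW, EW, c |` VW) \<noteq> (V, E, c)"
    then have "duplicator_wins k r (VW, EW, c |` VW)" using minimal sub by blast
    then show False using WD(6) unfolding duplicator_wins_def by simp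
  qed
  then have VWe: "VW = V" and EWe: "EW = E" by auto
  have reachV: "reach E V z (2^r)" using WD(5) VWe EWe by simp
  have zV: "z \<in> V" using WD(4) VWe by simp
  have edges: "\<forall>e\<in>E. e \<subseteq> V" using WD(3) VWe EWe by simp
  have conn: "connected_graph V E"
    unfolding connected_graph_def
  proof (intro ballI)
    fix u v assume u: "u \<in> V" and v: "v \<in> V"
    obtain xs where xs: "is_walk E xs" "set xs \<subseteq> V" "hd xs = z" "last xs = u"
      using reachV u unfolding reach_def by blast
    obtain ys where ys: "is_walk E ys" "set ys \<subseteq> V" "hd ys = z" "last ys = v"
      using reachV v unfolding reach_def by blast
    have j: "is_walk E (rev xs @ tl ys) \<and> hd (rev xs @ tl ys) = last xs \<and> last (rev xs @ tl ys) = last ys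
     \<and> length (rev xs @ tl ys) = length xs + length ys - 1 \<and> set (rev xs @ tl ys) \<subseteq> set xs \<union> set ys"
      using walk_join[OF xs(1) ys(1)] xs(3) ys(3) by simp
    show "\<exists>ws. is_walk E ws \<and> set ws \<subseteq> V \<and> hd ws = u \<and> last ws = v"
      using j xs ys by (intro exI[of _ "rev xs @ tl ys"]) blast
  qed
  define g where "g = girth VG EG"
  obtain cs where cs: "set cs \<subseteq> VG" "is_cycle EG cs" using assms(2) unfolding has_cycle_def by blast
  have "\<exists>cs'. set cs' \<subseteq> VG \<and> is_cycle EG cs' \<and> length cs' = g"
    unfolding g_def girth_def by (rule LeastI_ex) (use cs in blast)
  then have g3: "g \<ge> 3" unfolding is_cycle_def by auto
  have "real r + 1 \<le> log 2 (real g - 2)" using assms(3) unfolding g_def by simp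
  then have "2 powr (real r + 1) \<le> real g - 2" using g3 by (subst (asm) le_log_iff) auto
  moreover have "2 powr (real r + 1) = (2::real) ^ (r + 1)"
    using powr_realpow[of 2 "r + 1"] by (simp add: add.commute)
  ultimately have "real (2 ^ (r + 1)) \<le> real g - 2" by simp
  then have gbig: "2 ^ (r + 1) + 2 \<le> g" by linarith
  have nocyc: "\<not> has_cycle V E"
  proof
    assume "has_cycle V E"
    then obtain xs where xs: "set xs \<subseteq> V" "is_cycle E xs" unfolding has_cycle_def by blast
    interpret dist_ctx V E z "2^r" using reachV edges by unfold_locales
    obtain ys where ys: "set ys \<subseteq> V" "is_cycle E ys" "length ys \<le> 2 * 2^r + 1"
      using short_cycle[OF gV xs] by blast
    define zs where "zs = map f ys"
    have ne: "ys \<noteq> []" using ys(2) unfolding is_cycle_def by auto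
    have "successively (\<lambda>x y. {x, y} \<in> E) ys" using ys(2) unfolding is_cycle_def is_walk_succ by simp
    then have "successively (\<lambda>x y. {f x, f y} \<in> EG) ys"
      by (rule successively_mono) (use f(3) in fastforce)
    then have wz: "is_walk EG zs" unfolding zs_def is_walk_succ successively_map using ne by simp
    have dz: "distinct zs" unfolding zs_def using ys(2) f(1) ys(1)
      by (simp add: distinct_map is_cycle_def inj_on_subset)
    have "{last ys, hd ys} \<in> E" using ys(2) unfolding is_cycle_def by simp
    then have "{f (last ys), f (hd ys)} \<in> EG" using f(3) by fastforce
    then have "{last zs, hd zs} \<in> EG" unfolding zs_def using ne by (simp add: last_map hd_map)
    then have "is_cycle EG zs" using wz dz ys(2) unfolding is_cycle_def zs_def by simp
    moreover have "set zs \<subseteq> VG" using ys(1) f(2) unfolding zs_def by auto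
    ultimately have "g \<le> length zs" unfolding g_def girth_def by (intro Least_le) blast
    then show False using ys(3) gbig unfolding zs_def by simp
  qed
  show ?thesis unfolding is_tree_def using zV conn nocyc by blast
qed


end
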